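(* Let $k_0,k_1,k_{-1},k_2,e_T$ be positive real numbers and consider the system \[ \dot s = k_0-k_1(e_T-c)s+k_{-1}c,\qquad \dot c = k_1(e_T-c)s-(k_{-1}+k_2)c \] on $\{s\ge0,\ 0\le c\le e_T\}$. Define the set \[ W_1:=\left\{(s,c):\ s\ge 0,\ \max\left\{0,\ \frac{k_1e_Ts-k_0}{k_1s+k_{-1}}\right\}\le c\le \frac{k_1e_Ts}{k_1s+k_{-1}+k_2}\right\}. \] Then: (a) If the system has no stationary point with positive coordinates, i.e. $k_0>k_2e_T$, then $\frac{k_1e_Ts}{k_1s+k_{-1}+k_2}>\frac{k_1e_Ts-k_0}{k_1s+k_{-1}}$ for all $s\ge 0$, and $W_1$ extends to $s\to\infty$. If the system has the positive stationary point $(\widehat s,\widehat c)$, then the two curves $c=\frac{k_1e_Ts}{k_1s+k_{-1}+k_2}$ and $c=\frac{k_1e_Ts-k_0}{k_1s+k_{-1}}$ meet at this point, and $s\le\widehat s$, $c\le \widehat c$ for all points $(s,c)\in W_1$. (b) $W_1$ is positively invariant for the system, and $\dot s\ge 0$ on $W_1$.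
   Context: The curves $c=\frac{k_1e_Ts}{k_1s+k_{-1}+k_2}$ and $c=\frac{k_1e_Ts-k_0}{k_1s+k_{-1}}$ are the $c$-nullcline ($\dot c=0$) and the $s$-nullcline ($\dot s=0$), respectively. When $k_2e_T>k_0$ the system has the unique stationary point $(\widehat s,\widehat c)=\left(\frac{(k_{-1}+k_2)k_0}{k_1(k_2e_T-k_0)},\frac{k_0}{k_2}\right)$ with positive coordinates. *)

theory Defs
  imports "HOL-Analysis.Analysis"
begin

definition sdot :: "real \<Rightarrow> real \<Rightarrow> real \<Rightarrow> real \<Rightarrow> real \<Rightarrow> real \<Rightarrow> real \<Rightarrow> real" where
  "sdot k0 k1 km1 k2 eT s c = k0 - k1 * (eT - c) * s + km1 * c"

definition cdot :: "real \<Rightarrow> real \<Rightarrow> real \<Rightarrow> real \<Rightarrow> real \<Rightarrow> real \<Rightarrow> real \<Rightarrow> real" where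
  "cdot k0 k1 km1 k2 eT s c = k1 * (eT - c) * s - (km1 + k2) * c"

definition c_null :: "real \<Rightarrow> real \<Rightarrow> real \<Rightarrow> real \<Rightarrow> real \<Rightarrow> real" where
  "c_null k1 km1 k2 eT s = k1 * eT * s / (k1 * s + km1 + k2)"

definition s_null :: "real \<Rightarrow> real \<Rightarrow> real \<Rightarrow> real \<Rightarrow> real \<Rightarrow> real" where
  "s_null k0 k1 km1 eT s = (k1 * eT * s - k0) / (k1 * s + km1)"

definition W1 :: "real \<Rightarrow> real \<Rightarrow> real \<Rightarrow> real \<Rightarrow> real \<Rightarrow> (real \<times> real) set" where
  "W1 k0 k1 km1 k2 eT = {(s, c). s \<ge> 0 \<and> max 0 (s_null k0 k1 km1 eT s) \<le> c
                                 \<and> c \<le> c_null k1 km1 k2 eT s}"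

definition pos_invariant ::
  "(real \<Rightarrow> real \<Rightarrow> real) \<Rightarrow> (real \<Rightarrow> real \<Rightarrow> real) \<Rightarrow> (real \<times> real) set \<Rightarrow> bool" where
  "pos_invariant F G A \<longleftrightarrow>
     (\<forall>(s :: real \<Rightarrow> real) (c :: real \<Rightarrow> real) (T :: real). 0 \<le> T \<longrightarrow>
        (\<forall>t\<in>{0..T}. (s has_real_derivative F (s t) (c t)) (at t within {0..T}) \<and>
                     (c has_real_derivative G (s t) (c t)) (at t within {0..T})) \<longrightarrow>
        (s 0, c 0) \<in> A \<longrightarrow> (\<forall>t\<in>{0..T}. (s t, c t) \<in> A))"

end

theory Submission
  imports Defs
begin


lemma first_zero:
  fixes m :: "real \<Rightarrow> real"
  assumes cm: "continuous_on {0..T} m" and m0: "m 0 > 0" and t: "t \<in> {0..T}" "m t \<le> 0"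
  obtains t1 where "t1 \<in> {0..T}" "t1 > 0" "m t1 = 0" "\<forall>u\<in>{0..<t1}. m u > 0"
proof -
  define B where "B = {u \<in> {0..T}. m u \<le> (\<lambda>_. 0) u}"
  have cB: "closed B" unfolding B_def
    by (rule continuous_on_closed_Collect_le[OF cm continuous_on_const closed_atLeastAtMost])
  have ne: "B \<noteq> {}" using t by (auto simp: B_def)
  have bb: "bdd_below B" by (auto simp: B_def bdd_below_def)
  define t1 where "t1 = Inf B"
  have t1B: "t1 \<in> B" using closed_contains_Inf[OF ne bb cB] by (simp add: t1_def)
  have low: "\<forall>u\<in>{0..<t1}. m u > 0"
  proof
    fix u assume u: "u \<in> {0..<t1}"
    show "m u > 0"
    proof (rule ccontr)
      assume "\<not> m u > 0"
      then have "u \<in> B" using u t1B by (auto simp: B_def)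
      then have "t1 \<le> u" unfolding t1_def by (rule cInf_lower[OF _ bb])
      then show False using u by auto
    qed
  qed
  have t1pos: "t1 > 0" using t1B m0 by (auto simp: B_def) (metis antisym_conv1 not_less)
  have "m t1 = 0"
  proof -
    have "continuous_on {0..t1} m" using cm t1B by (auto simp: B_def intro: continuous_on_subset)
    then obtain x where x: "0 \<le> x" "x \<le> t1" "m x = 0"
      using IVT2'[of m t1 0 0] t1B m0 t1pos by (auto simp: B_def)
    then have "x = t1" using low by (metis atLeastLessThan_iff less_irrefl order_le_less)
    then show ?thesis using x by simp
  qed
  then show ?thesis using that t1B t1pos low by (auto simp: B_def)
qed

lemma deriv_nonpos:
  fixes f :: "real \<Rightarrow> real"
  assumes d: "(f has_real_derivative D) (at t1 within {0..T})" and "t1 > 0" "t1 \<le> T"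
    and "f t1 = 0" and pos: "\<forall>u\<in>{0..<t1}. f u > 0"
  shows "D \<le> 0"
proof (rule ccontr)
  assume "\<not> D \<le> 0"
  then obtain d where d: "d > 0" "\<forall>h>0. t1 - h \<in> {0..T} \<longrightarrow> h < d \<longrightarrow> f (t1 - h) < f t1"
    using has_real_derivative_pos_inc_left[OF d] by auto
  define h where "h = min (d/2) (t1/2)"
  have "h > 0" "h < d" "t1 - h \<in> {0..T}" "t1 - h \<in> {0..<t1}" using d assms by (auto simp: h_def)
  then show False using d pos assms by fastforce
qed

lemma mono_from_deriv:
  fixes f :: "real \<Rightarrow> real"
  assumes d: "\<forall>u\<in>{0..T}. (f has_real_derivative f' u) (at u within {0..T})"
    and nn: "\<forall>u. 0 < u \<longrightarrow> u < t \<longrightarrow> f' u \<ge> 0" and "0 \<le> t" "t \<le> T"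
  shows "f 0 \<le> f t"
proof (rule DERIV_nonneg_imp_increasing_open[of 0 t f])
  show "0 \<le> t" by fact
  show "\<exists>y. (f has_real_derivative y) (at x) \<and> 0 \<le> y" if "0 < x" "x < t" for x
  proof (intro exI[of _ "f' x"] conjI)
    have "x \<in> {0..T}" using that assms by auto
    then have "(f has_real_derivative f' x) (at x within {0..T})" using d by auto
    moreover have "at x within {0..T} = at x" using that assms by (intro at_within_Icc_at) auto
    ultimately show "(f has_real_derivative f' x) (at x)" by simp
    show "0 \<le> f' x" using nn that by auto
  qed
  have "continuous_on {0..T} f" using d by (intro DERIV_continuous_on) auto
  then show "continuous_on {0..t} f" by (rule continuous_on_subset) (use assms in auto)
qed

lemma xy_nonneg:
  fixes s c :: "real \<Rightarrow> real" and k0 k1 km1 k2 eT T :: real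
  assumes pos: "k0 > 0" "k1 > 0" "km1 > 0" "k2 > 0" "eT > 0" and T: "T \<ge> 0"
    and ds: "\<forall>t\<in>{0..T}. (s has_real_derivative sdot k0 k1 km1 k2 eT (s t) (c t)) (at t within {0..T})"
    and dc: "\<forall>t\<in>{0..T}. (c has_real_derivative cdot k0 k1 km1 k2 eT (s t) (c t)) (at t within {0..T})"
    and x0: "sdot k0 k1 km1 k2 eT (s 0) (c 0) \<ge> 0" and y0: "cdot k0 k1 km1 k2 eT (s 0) (c 0) \<ge> 0"
    and s0: "s 0 \<ge> 0"
  shows "\<forall>t\<in>{0..T}. sdot k0 k1 km1 k2 eT (s t) (c t) \<ge> 0 \<and> cdot k0 k1 km1 k2 eT (s t) (c t) \<ge> 0"
proof -
  define x where "x t = sdot k0 k1 km1 k2 eT (s t) (c t)" for t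
  define y where "y t = cdot k0 k1 km1 k2 eT (s t) (c t)" for t
  define p where "p t = k1 * (eT - c t)" for t
  define q where "q t = k1 * s t + km1" for t
  define r where "r t = k1 * s t + km1 + k2" for t
  have dx: "(x has_real_derivative (- p t * x t + q t * y t)) (at t within {0..T})"
    if "t \<in> {0..T}" for t
  proof -
    have Ds: "(s has_real_derivative x t) (at t within {0..T})" using ds that by (simp add: x_def)
    have Dc: "(c has_real_derivative y t) (at t within {0..T})" using dc that by (simp add: y_def)
    have "((\<lambda>t. k0 - k1 * (eT - c t) * s t + km1 * c t) has_real_derivative
       (0 - k1 * ((0 - y t) * s t + (eT - c t) * x t) + km1 * y t)) (at t within {0..T})"
      by (auto intro!: derivative_eq_intros Ds Dc simp: algebra_simps)
    then show ?thesis unfolding x_def [abs_def] sdot_def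
      by (rule DERIV_cong) (simp add: algebra_simps p_def q_def)
  qed
  have dy: "(y has_real_derivative (p t * x t - r t * y t)) (at t within {0..T})"
    if "t \<in> {0..T}" for t
  proof -
    have Ds: "(s has_real_derivative x t) (at t within {0..T})" using ds that by (simp add: x_def)
    have Dc: "(c has_real_derivative y t) (at t within {0..T})" using dc that by (simp add: y_def)
    have "((\<lambda>t. k1 * (eT - c t) * s t - (km1 + k2) * c t) has_real_derivative
       (k1 * ((0 - y t) * s t + (eT - c t) * x t) - (km1 + k2) * y t)) (at t within {0..T})"
      by (auto intro!: derivative_eq_intros Ds Dc simp: algebra_simps)
    then show ?thesis unfolding y_def [abs_def] cdot_def
      by (rule DERIV_cong) (simp add: algebra_simps p_def r_def)
  qed
  have cs: "continuous_on {0..T} s" using ds by (intro DERIV_continuous_on) auto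
  have cc: "continuous_on {0..T} c" using dc by (intro DERIV_continuous_on) auto
  have cx: "continuous_on {0..T} x" using dx by (intro DERIV_continuous_on) auto
  have cy: "continuous_on {0..T} y" using dy by (intro DERIV_continuous_on) auto
  obtain Ms where Ms: "\<forall>t\<in>{0..T}. \<bar>s t\<bar> \<le> Ms"
    using compact_imp_bounded[OF compact_continuous_image[OF cs compact_Icc]]
    unfolding bounded_real by auto
  obtain Mc where Mc: "\<forall>t\<in>{0..T}. \<bar>c t\<bar> \<le> Mc"
    using compact_imp_bounded[OF compact_continuous_image[OF cc compact_Icc]]
    unfolding bounded_real by auto
  have Ms0: "Ms \<ge> 0" and Mc0: "Mc \<ge> 0" using Ms Mc T by force+
  define K where "K = k1 * (eT + Mc) + k1 * Ms + km1 + k2"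
  define L where "L = 2 * K + 1"
  have pK: "\<bar>p t\<bar> \<le> K" if "t \<in> {0..T}" for t
  proof -
    have "\<bar>p t\<bar> = k1 * \<bar>eT - c t\<bar>" using pos by (simp add: p_def abs_mult)
    also have "\<dots> \<le> k1 * (eT + Mc)"
    proof (intro mult_left_mono)
      have "\<bar>c t\<bar> \<le> Mc" using Mc that by auto
      then show "\<bar>eT - c t\<bar> \<le> eT + Mc" using pos by linarith
    qed (use pos in auto)
    finally show ?thesis using pos Ms0 Mc0 mult_nonneg_nonneg[of k1 Ms] mult_nonneg_nonneg[of k1 "eT+Mc"] unfolding K_def by linarith
  qed
  have qK: "\<bar>q t\<bar> \<le> K" if "t \<in> {0..T}" for t
  proof -
    have "\<bar>q t\<bar> \<le> k1 * \<bar>s t\<bar> + km1" using abs_triangle_ineq[of "k1 * s t" km1] pos by (simp add: q_def abs_mult)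
    also have "\<dots> \<le> k1 * Ms + km1" using Ms that pos by (simp add: mult_left_mono)
    finally show ?thesis using pos Ms0 Mc0 mult_nonneg_nonneg[of k1 Ms] mult_nonneg_nonneg[of k1 "eT+Mc"] unfolding K_def by linarith
  qed
  have rK: "\<bar>r t\<bar> \<le> K" if "t \<in> {0..T}" for t
  proof -
    have "\<bar>r t\<bar> \<le> k1 * \<bar>s t\<bar> + km1 + k2" using abs_triangle_ineq[of "k1 * s t" "km1 + k2"] pos by (simp add: r_def abs_mult add.assoc)
    also have "\<dots> \<le> k1 * Ms + km1 + k2" using Ms that pos by (simp add: mult_left_mono)
    finally show ?thesis using pos Ms0 Mc0 mult_nonneg_nonneg[of k1 Ms] mult_nonneg_nonneg[of k1 "eT+Mc"] unfolding K_def by linarith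
  qed
  have K0: "K \<ge> 0" using pos Ms0 Mc0 mult_nonneg_nonneg[of k1 Ms] mult_nonneg_nonneg[of k1 "eT+Mc"] unfolding K_def by linarith
  have L0: "L > 0" using K0 by (simp add: L_def)
  define e0 where "e0 = min (km1 / (k1 * (T + 1))) (eT * (km1 + k2)) / exp (L * T)"
  have e0pos: "e0 > 0" using pos T by (simp add: e0_def)
  have main: "x t + \<epsilon> * exp (L * t) > 0 \<and> y t + \<epsilon> * exp (L * t) > 0"
    if eps: "0 < \<epsilon>" "\<epsilon> \<le> e0" and t: "t \<in> {0..T}" for \<epsilon> t
  proof (rule ccontr)
    assume neg: "\<not> ?thesis"
    define m where "m u = min (x u + \<epsilon> * exp (L * u)) (y u + \<epsilon> * exp (L * u))" for u
    have cm: "continuous_on {0..T} m" unfolding m_def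
      by (intro continuous_intros cx cy)
    have m0: "m 0 > 0" using x0 y0 eps by (simp add: m_def x_def y_def)
    have "m t \<le> 0" using neg by (auto simp: m_def)
    then obtain t1 where t1: "t1 \<in> {0..T}" "t1 > 0" "m t1 = 0" "\<forall>u\<in>{0..<t1}. m u > 0"
      using first_zero[OF cm m0 t] by blast
    define E where "E = \<epsilon> * exp (L * t1)"
    have E0: "E > 0" using eps by (simp add: E_def)
    have EB: "E \<le> \<epsilon> * exp (L * T)" using t1 eps L0 by (simp add: E_def)
    have eB: "\<epsilon> * exp (L * T) \<le> min (km1 / (k1 * (T + 1))) (eT * (km1 + k2))"
      using eps by (simp add: e0_def pos_le_divide_eq mult.commute)
    have slow: "s 0 \<le> s t1 + \<epsilon> * exp (L * T) * t1"
    proof -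
      have "(\<lambda>u. s u + \<epsilon> * exp (L * T) * u) 0 \<le> (\<lambda>u. s u + \<epsilon> * exp (L * T) * u) t1"
      proof (rule mono_from_deriv[where f' = "\<lambda>u. x u + \<epsilon> * exp (L * T)" and T = T])
        show "\<forall>u\<in>{0..T}. ((\<lambda>u. s u + \<epsilon> * exp (L * T) * u) has_real_derivative x u + \<epsilon> * exp (L * T)) (at u within {0..T})"
          using ds unfolding x_def by (auto intro!: derivative_eq_intros)
        show "\<forall>u>0. u < t1 \<longrightarrow> 0 \<le> x u + \<epsilon> * exp (L * T)"
        proof (intro allI impI)
          fix u assume u: "0 < u" "u < t1"
          then have "m u > 0" using t1 by auto
          then have "x u + \<epsilon> * exp (L * u) > 0" by (simp add: m_def)
          moreover have "\<epsilon> * exp (L * u) \<le> \<epsilon> * exp (L * T)" using u t1 eps L0 by simp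
          ultimately show "0 \<le> x u + \<epsilon> * exp (L * T)" by linarith
        qed
      qed (use t1 in auto)
      then show ?thesis by simp
    qed
    have "\<epsilon> * exp (L * T) * t1 \<le> km1 / (k1 * (T + 1)) * T"
      using eB t1 eps pos T by (intro mult_mono) auto
    also have "\<dots> = km1 / k1 * (T / (T + 1))" using pos T by (simp add: field_simps)
    also have "\<dots> < km1 / k1 * 1" using pos T by (intro mult_strict_left_mono) auto
    finally have "\<epsilon> * exp (L * T) * t1 < km1 / k1" by simp
    then have "s t1 > - km1 / k1" using slow s0 by linarith
    then have q1: "q t1 > 0" using pos by (simp add: q_def field_simps)
    have r1: "r t1 > 0" using q1 pos by (simp add: q_def r_def)
    have Ele: "E \<le> eT * (km1 + k2)" using EB eB by linarith
    have mt1: "x t1 + E \<ge> 0" "y t1 + E \<ge> 0" and mz: "x t1 + E = 0 \<or> y t1 + E = 0"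
      using t1(3) by (auto simp: m_def E_def min_def split: if_splits)
    have p1: "p t1 \<ge> 0"
    proof -
      have "(eT - c t1) * r t1 = y t1 + eT * (km1 + k2)"
        by (simp add: r_def y_def cdot_def algebra_simps)
      also have "\<dots> \<ge> 0" using mt1 Ele by linarith
      finally have "(eT - c t1) * r t1 \<ge> 0" .
      then have "eT - c t1 \<ge> 0" using r1 by (simp add: zero_le_mult_iff)
      then show ?thesis using pos by (simp add: p_def)
    qed
    have low: "\<forall>u\<in>{0..<t1}. x u + \<epsilon> * exp (L * u) > 0 \<and> y u + \<epsilon> * exp (L * u) > 0"
      using t1(4) by (auto simp: m_def)
    have dexp: "((\<lambda>u. \<epsilon> * exp (L * u)) has_real_derivative L * E) (at t1 within {0..T})"
      by (auto intro!: derivative_eq_intros simp: E_def)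
    from mz show False
    proof
      assume z: "x t1 + E = 0"
      have "- p t1 * x t1 + q t1 * y t1 + L * E \<le> 0"
        apply (rule deriv_nonpos[of "\<lambda>u. x u + \<epsilon> * exp (L * u)" _ t1 T])
        using dx[OF t1(1)] dexp z t1 low by (auto intro!: derivative_eq_intros simp: E_def)
      moreover have "- p t1 * x t1 = p t1 * E"
      proof -
        have "x t1 = - E" using z by linarith
        then show ?thesis by simp
      qed
      moreover have "p t1 * E \<ge> - (K * E)"
      proof -
        have "- K \<le> p t1" using pK[OF t1(1)] by (simp add: abs_le_iff)
        then show ?thesis using mult_right_mono[of "- K" "p t1" E] E0 by simp
      qed
      moreover have "q t1 * y t1 \<ge> - (q t1 * E)" using mult_left_mono[of "- E" "y t1" "q t1"] q1 mt1 by auto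
      moreover have "q t1 * E \<le> K * E" using qK[OF t1(1)] E0 by (intro mult_right_mono) auto
      moreover have "L * E = 2 * (K * E) + E" by (simp add: L_def algebra_simps)
      moreover have "K * E \<ge> 0" using K0 E0 by simp
      ultimately show False using E0 by linarith
    next
      assume z: "y t1 + E = 0"
      have "p t1 * x t1 - r t1 * y t1 + L * E \<le> 0"
        apply (rule deriv_nonpos[of "\<lambda>u. y u + \<epsilon> * exp (L * u)" _ t1 T])
        using dy[OF t1(1)] dexp z t1 low by (auto intro!: derivative_eq_intros simp: E_def)
      moreover have "r t1 * y t1 = - (r t1 * E)"
      proof -
        have "y t1 = - E" using z by linarith
        then show ?thesis by simp
      qed
      moreover have "r t1 * E \<ge> 0" using r1 E0 by simp
      moreover have "p t1 * x t1 \<ge> - (p t1 * E)" using mult_left_mono[of "- E" "x t1" "p t1"] p1 mt1 by auto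
      moreover have "p t1 * E \<le> K * E" using pK[OF t1(1)] E0 by (intro mult_right_mono) auto
      moreover have "L * E = 2 * (K * E) + E" by (simp add: L_def algebra_simps)
      moreover have "K * E \<ge> 0" using K0 E0 by simp
      ultimately show False using E0 by linarith
    qed
  qed
  have "x t \<ge> 0 \<and> y t \<ge> 0" if t: "t \<in> {0..T}" for t
  proof -
    have gen: "z t \<ge> 0" if hz: "\<And>\<epsilon>. 0 < \<epsilon> \<Longrightarrow> \<epsilon> \<le> e0 \<Longrightarrow> z t + \<epsilon> * exp (L * t) > 0" for z :: "real \<Rightarrow> real"
    proof (rule ccontr)
      assume "\<not> z t \<ge> 0"
      then have zn: "z t < 0" by simp
      define \<epsilon> where "\<epsilon> = min e0 (- z t / (2 * exp (L * t)))"
      have "\<epsilon> > 0" using e0pos zn by (simp add: \<epsilon>_def divide_neg_pos)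
      then have "z t + \<epsilon> * exp (L * t) > 0" using hz by (simp add: \<epsilon>_def)
      moreover have "\<epsilon> * exp (L * t) \<le> (- z t / (2 * exp (L * t))) * exp (L * t)"
        by (intro mult_right_mono) (auto simp: \<epsilon>_def)
      moreover have "(- z t / (2 * exp (L * t))) * exp (L * t) = - z t / 2" by simp
      ultimately show False using zn by linarith
    qed
    show ?thesis using gen[of x] gen[of y] main t by blast
  qed
  then show ?thesis by (simp add: x_def y_def)
qed

lemma x_iff:
  assumes "k1 > 0" "km1 > 0" "s \<ge> 0"
  shows "s_null k0 k1 km1 eT s \<le> c \<longleftrightarrow> sdot k0 k1 km1 k2 eT s c \<ge> 0"
proof -
  have d: "k1 * s + km1 > 0" using assms by (simp add: add_nonneg_pos)
  show ?thesis unfolding s_null_def sdot_def using d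
    by (simp add: divide_le_eq algebra_simps)
qed

lemma y_iff:
  assumes "k1 > 0" "km1 > 0" "k2 > 0" "s \<ge> 0"
  shows "c \<le> c_null k1 km1 k2 eT s \<longleftrightarrow> cdot k0 k1 km1 k2 eT s c \<ge> 0"
proof -
  have d: "k1 * s + km1 + k2 > 0" using assms by (simp add: add_nonneg_pos add_pos_pos)
  show ?thesis unfolding c_null_def cdot_def using d
    by (simp add: le_divide_eq algebra_simps)
qed

lemma null_diff:
  assumes "k1 > 0" "km1 > 0" "k2 > 0" "s \<ge> 0"
  shows "c_null k1 km1 k2 eT s - s_null k0 k1 km1 eT s =
    (k0 * (k1 * s + km1 + k2) - k1 * k2 * eT * s) / ((k1 * s + km1 + k2) * (k1 * s + km1))"
proof -
  have d: "k1 * s + km1 > 0" "k1 * s + km1 + k2 > 0" using assms by (simp_all add: add_nonneg_pos add_pos_pos)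
  show ?thesis unfolding c_null_def s_null_def using d
    by (simp add: field_simps)
qed

lemma c_null_mono:
  assumes "k1 > 0" "km1 > 0" "k2 > 0" "eT > 0" "0 \<le> s" "s \<le> s'"
  shows "c_null k1 km1 k2 eT s \<le> c_null k1 km1 k2 eT s'"
proof -
  have d: "k1 * s + km1 + k2 > 0" "k1 * s' + km1 + k2 > 0" using assms by (simp_all add: add_nonneg_pos add_pos_pos)
  have "k1 * eT * s * (k1 * s' + km1 + k2) \<le> k1 * eT * s' * (k1 * s + km1 + k2)"
  proof -
    have "k1 * eT * (km1 + k2) * s \<le> k1 * eT * (km1 + k2) * s'" using assms by (intro mult_left_mono) auto
    then show ?thesis by (simp add: algebra_simps)
  qed
  then show ?thesis unfolding c_null_def using d by (simp add: divide_simps)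
qed


theorem lemma4p3:
  fixes k0 k1 km1 k2 eT :: real
  assumes "k0 > 0" "k1 > 0" "km1 > 0" "k2 > 0" "eT > 0"
  shows
    "(k0 > k2 * eT \<longrightarrow>
        (\<forall>s\<ge>0. c_null k1 km1 k2 eT s > s_null k0 k1 km1 eT s) \<and>
        (\<forall>S. \<exists>s c. s \<ge> S \<and> (s, c) \<in> W1 k0 k1 km1 k2 eT))
     \<and> (k2 * eT > k0 \<longrightarrow>
        (let sh = (km1 + k2) * k0 / (k1 * (k2 * eT - k0)); ch = k0 / k2 in
           c_null k1 km1 k2 eT sh = ch \<and> s_null k0 k1 km1 eT sh = ch \<and>
           (\<forall>(s, c) \<in> W1 k0 k1 km1 k2 eT. s \<le> sh \<and> c \<le> ch)))
     \<and> pos_invariant (sdot k0 k1 km1 k2 eT) (cdot k0 k1 km1 k2 eT) (W1 k0 k1 km1 k2 eT)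
     \<and> (\<forall>(s, c) \<in> W1 k0 k1 km1 k2 eT. sdot k0 k1 km1 k2 eT s c \<ge> 0)"
proof -
  note pos = assms
  have A: "k0 > k2 * eT \<longrightarrow>
        (\<forall>s\<ge>0. c_null k1 km1 k2 eT s > s_null k0 k1 km1 eT s) \<and>
        (\<forall>S. \<exists>s c. s \<ge> S \<and> (s, c) \<in> W1 k0 k1 km1 k2 eT)"
  proof
    assume h: "k0 > k2 * eT"
    have gt: "c_null k1 km1 k2 eT s > s_null k0 k1 km1 eT s" if s: "s \<ge> 0" for s
    proof -
      have d: "k1 * s + km1 > 0" "k1 * s + km1 + k2 > 0" using pos s by (simp_all add: add_nonneg_pos add_pos_pos)
      have "k1 * k2 * eT * s \<le> k1 * k0 * s"
      proof -
        have "k2 * eT * (k1 * s) \<le> k0 * (k1 * s)" using h pos s by (intro mult_right_mono) auto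
        then show ?thesis by (simp add: algebra_simps)
      qed
      moreover have "k0 * (km1 + k2) > 0" using pos by simp
      ultimately have "k0 * (k1 * s + km1 + k2) - k1 * k2 * eT * s > 0" by (simp add: algebra_simps)
      then have "c_null k1 km1 k2 eT s - s_null k0 k1 km1 eT s > 0"
        using null_diff[OF pos(2,3,4) s, of eT k0] d by simp
      then show ?thesis by simp
    qed
    show "(\<forall>s\<ge>0. c_null k1 km1 k2 eT s > s_null k0 k1 km1 eT s) \<and>
        (\<forall>S. \<exists>s c. s \<ge> S \<and> (s, c) \<in> W1 k0 k1 km1 k2 eT)"
    proof (intro conjI allI impI)
      fix S :: real
      define s where "s = max S 0"
      have s0: "s \<ge> 0" "s \<ge> S" by (auto simp: s_def)
      have "c_null k1 km1 k2 eT s \<ge> 0" using pos s0 unfolding c_null_def by (simp add: add_nonneg_pos add_pos_pos)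
      then have "(s, c_null k1 km1 k2 eT s) \<in> W1 k0 k1 km1 k2 eT"
        using gt[OF s0(1)] s0 unfolding W1_def by auto
      then show "\<exists>s c. s \<ge> S \<and> (s, c) \<in> W1 k0 k1 km1 k2 eT" using s0 by blast
    qed (use gt in auto)
  qed
  have B: "k2 * eT > k0 \<longrightarrow>
        (let sh = (km1 + k2) * k0 / (k1 * (k2 * eT - k0)); ch = k0 / k2 in
           c_null k1 km1 k2 eT sh = ch \<and> s_null k0 k1 km1 eT sh = ch \<and>
           (\<forall>(s, c) \<in> W1 k0 k1 km1 k2 eT. s \<le> sh \<and> c \<le> ch))"
  proof
    assume h: "k2 * eT > k0"
    define sh where "sh = (km1 + k2) * k0 / (k1 * (k2 * eT - k0))"
    define ch where "ch = k0 / k2"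
    have dpos: "k2 * eT - k0 > 0" using h by simp
    have sh0: "sh \<ge> 0" using pos dpos by (simp add: sh_def)
    have k1sh: "k1 * sh = (km1 + k2) * k0 / (k2 * eT - k0)" using pos dpos by (simp add: sh_def)
    have Dp: "k1 * sh + km1 + k2 > 0" "k1 * sh + km1 > 0" using pos sh0 by (simp_all add: add_nonneg_pos add_pos_pos)
    have Sd: "k1 * sh * (k2 * eT - k0) = (km1 + k2) * k0" using dpos by (simp add: k1sh)
    have e1: "c_null k1 km1 k2 eT sh = ch"
    proof -
      have "k1 * eT * sh * k2 - k0 * (k1 * sh + km1 + k2) = k1 * sh * (k2 * eT - k0) - (km1 + k2) * k0"
        by (simp add: algebra_simps)
      then have "k1 * eT * sh * k2 = k0 * (k1 * sh + km1 + k2)" using Sd by simp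
      then show ?thesis unfolding c_null_def ch_def using Dp pos by (simp add: frac_eq_eq)
    qed
    have e2: "s_null k0 k1 km1 eT sh = ch"
    proof -
      have "(k1 * eT * sh - k0) * k2 - k0 * (k1 * sh + km1) = k1 * sh * (k2 * eT - k0) - (km1 + k2) * k0"
        by (simp add: algebra_simps)
      then have "(k1 * eT * sh - k0) * k2 = k0 * (k1 * sh + km1)" using Sd by simp
      then show ?thesis unfolding s_null_def ch_def using Dp pos by (simp add: frac_eq_eq)
    qed
    have e3: "s \<le> sh \<and> c \<le> ch" if sc: "(s, c) \<in> W1 k0 k1 km1 k2 eT" for s c
    proof -
      have s0: "s \<ge> 0" and le: "s_null k0 k1 km1 eT s \<le> c_null k1 km1 k2 eT s"
        and cle: "c \<le> c_null k1 km1 k2 eT s" using sc unfolding W1_def by auto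
      have d: "k1 * s + km1 > 0" "k1 * s + km1 + k2 > 0" using pos s0 by (simp_all add: add_nonneg_pos add_pos_pos)
      have "(k0 * (k1 * s + km1 + k2) - k1 * k2 * eT * s) / ((k1 * s + km1 + k2) * (k1 * s + km1)) \<ge> 0"
        using null_diff[OF pos(2,3,4) s0, of eT k0] le by simp
      then have "k0 * (k1 * s + km1 + k2) - k1 * k2 * eT * s \<ge> 0" using d mult_pos_pos[OF d(2) d(1)]
        by (simp add: zero_le_divide_iff)
      then have "s * (k1 * (k2 * eT - k0)) \<le> (km1 + k2) * k0" by (simp add: algebra_simps)
      then have ssh: "s \<le> sh" unfolding sh_def using pos dpos by (simp add: le_divide_eq)
      have "c \<le> ch" using cle c_null_mono[OF pos(2,3,4,5) s0 ssh] e1 by simp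
      then show ?thesis using ssh by simp
    qed
    show "let sh = (km1 + k2) * k0 / (k1 * (k2 * eT - k0)); ch = k0 / k2 in
           c_null k1 km1 k2 eT sh = ch \<and> s_null k0 k1 km1 eT sh = ch \<and>
           (\<forall>(s, c) \<in> W1 k0 k1 km1 k2 eT. s \<le> sh \<and> c \<le> ch)"
      unfolding Let_def sh_def[symmetric] ch_def[symmetric] using e1 e2 e3 by auto
  qed
  have D: "\<forall>(s, c) \<in> W1 k0 k1 km1 k2 eT. sdot k0 k1 km1 k2 eT s c \<ge> 0"
    using x_iff[OF pos(2,3)] unfolding W1_def by auto
  have C: "pos_invariant (sdot k0 k1 km1 k2 eT) (cdot k0 k1 km1 k2 eT) (W1 k0 k1 km1 k2 eT)"
    unfolding pos_invariant_def
  proof (intro allI impI ballI)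
    fix s c :: "real \<Rightarrow> real" and T t :: real
    assume T: "0 \<le> T"
      and der: "\<forall>t\<in>{0..T}. (s has_real_derivative sdot k0 k1 km1 k2 eT (s t) (c t)) (at t within {0..T}) \<and>
                     (c has_real_derivative cdot k0 k1 km1 k2 eT (s t) (c t)) (at t within {0..T})"
      and w0: "(s 0, c 0) \<in> W1 k0 k1 km1 k2 eT" and t: "t \<in> {0..T}"
    have ds: "\<forall>t\<in>{0..T}. (s has_real_derivative sdot k0 k1 km1 k2 eT (s t) (c t)) (at t within {0..T})"
      and dc: "\<forall>t\<in>{0..T}. (c has_real_derivative cdot k0 k1 km1 k2 eT (s t) (c t)) (at t within {0..T})"
      using der by auto
    have s0: "s 0 \<ge> 0" and c0: "c 0 \<ge> 0" using w0 unfolding W1_def by auto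
    have x0: "sdot k0 k1 km1 k2 eT (s 0) (c 0) \<ge> 0" using D w0 by auto
    have y0: "cdot k0 k1 km1 k2 eT (s 0) (c 0) \<ge> 0"
    proof -
      have "c 0 \<le> c_null k1 km1 k2 eT (s 0)" using w0 unfolding W1_def by auto
      then show ?thesis using y_iff[OF pos(2,3,4) s0] by blast
    qed
    have xy: "\<forall>t\<in>{0..T}. sdot k0 k1 km1 k2 eT (s t) (c t) \<ge> 0 \<and> cdot k0 k1 km1 k2 eT (s t) (c t) \<ge> 0"
      by (rule xy_nonneg[OF pos T ds dc x0 y0 s0])
    have "s 0 \<le> s t"
      by (rule mono_from_deriv[where f' = "\<lambda>u. sdot k0 k1 km1 k2 eT (s u) (c u)" and T = T])
         (use ds xy t in auto)
    then have st: "s t \<ge> 0" using s0 by simp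
    have "c 0 \<le> c t"
      by (rule mono_from_deriv[where f' = "\<lambda>u. cdot k0 k1 km1 k2 eT (s u) (c u)" and T = T])
         (use dc xy t in auto)
    then have ct: "c t \<ge> 0" using c0 by simp
    have xyt: "sdot k0 k1 km1 k2 eT (s t) (c t) \<ge> 0" "cdot k0 k1 km1 k2 eT (s t) (c t) \<ge> 0"
      using xy t by auto
    have "s_null k0 k1 km1 eT (s t) \<le> c t" using x_iff[OF pos(2,3) st] xyt(1) by blast
    moreover have "c t \<le> c_null k1 km1 k2 eT (s t)" using y_iff[OF pos(2,3,4) st] xyt(2) by blast
    ultimately show "(s t, c t) \<in> W1 k0 k1 km1 k2 eT" using st ct unfolding W1_def by auto
  qed
  show ?thesis using A B C D by blast
qed

end
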